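(* Let $\Omega\subset\mathbb{R}^n$ be a bounded open convex set with smooth boundary and let $u$ be a nonconstant continuous viscosity solution of $(N_\Lambda)$ with $\Lambda=\frac{2}{\operatorname{diam}(\Omega)}$. If $\bar x\in\overline\Omega$ is any point where $u$ attains its maximum over $\overline\Omega$ and $\underline x\in\overline\Omega$ is any point where $u$ attains its minimum over $\overline\Omega$, then $|\bar x-\underline x|=\operatorname{diam}(\Omega)$. In particular, $u$ attains its maximum and its minimum over $\overline\Omega$ only at points of $\partial\Omega$.
   Context: $\operatorname{diam}(\Omega)=\sup_{x,y\in\Omega}|x-y|$. $\nu$ denotes the outer unit normal to $\partial\Omega$, and $\Delta_\infty u=\sum_{i,j=1}^n u_{x_i}u_{x_ix_j}u_{x_j}$. For $\Lambda\ge 0$, problem $(N_\Lambda)$ is $$\min\{|\nabla u|-\Lambda|u|,-\Delta_\infty u\}=0 \text{ in }\{u>0\}\cap\Omega,\quad \max\{\Lambda|u|-|\nabla u|,-\Delta_\infty u\}=0 \text{ in }\{u<0\}\cap\Omega,\quad -\Delta_\infty u=0 \text{ in }\{u=0\}\cap\Omega,\quad \tfrac{\partial u}{\partial\nu}=0 \text{ on }\partial\Omega,$$ understood in the viscosity sense as follows. For $s\in\mathbb{R}$, $\xi\in\mathbb{R}^n$, $X$ a symmetric $n\times n$ matrix, let $F(s,\xi,X)=\min\{|\xi|-\Lambda|s|,-\langle X\xi,\xi\rangle\}$, $G(s,\xi,X)=\max\{\Lambda|s|-|\xi|,-\langle X\xi,\xi\rangle\}$, $H(X)=-\langle X\xi,\xi\rangle$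 (evaluated at the same $\xi$). For a function $u$ and point $x_0$, let $E$ denote $F$ if $u(x_0)>0$, $G$ if $u(x_0)<0$, $H$ if $u(x_0)=0$. An upper semicontinuous $u$ on $\overline\Omega$ is a viscosity subsolution if: for every $x_0\in\Omega$ and $\phi\in C^2(\Omega)$ with $\phi(x_0)=u(x_0)$ and $u(x)<\phi(x)$ for $x\neq x_0$, one has $E(\phi(x_0),\nabla\phi(x_0),\nabla^2\phi(x_0))\le 0$; and for every $x_0\in\partial\Omega$ and $\phi\in C^2(\overline\Omega)$ with the same touching property, $\min\{E(\phi(x_0),\nabla\phi(x_0),\nabla^2\phi(x_0)),\frac{\partial\phi}{\partial\nu}(x_0)\}\le 0$. A lower semicontinuous $u$ is a viscosity supersolution if the same holds with $u(x)>\phi(x)$ for $x\ne x_0$, with "$E\le 0$" replaced by "$E\ge 0$" at interior points and with $\max\{E(\phi(x_0),\nabla\phi(x_0),\nabla^2\phi(x_0)),\frac{\partial\phi}{\partial\nu}(x_0)\}\ge 0$ at boundary points. A continuous $u$ is a viscosity solution if it is both a sub- and a supersolution. *)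

theory Defs
  imports "HOL-Analysis.Analysis"
begin

text \<open>D ds x is the iterated partial
  derivative of f in the directions listed in ds (applied innermost-last).\<close>
definition smooth_on :: "'a::euclidean_space set \<Rightarrow> ('a \<Rightarrow> real) \<Rightarrow> bool" where
  "smooth_on S f \<longleftrightarrow> open S \<and>
     (\<exists>D :: 'a list \<Rightarrow> 'a \<Rightarrow> real.
        (\<forall>x\<in>S. D [] x = f x) \<and>
        (\<forall>ds. continuous_on S (D ds)) \<and>
        (\<forall>ds. \<forall>i\<in>Basis. \<forall>x\<in>S.
            ((\<lambda>t. D ds (x + t *\<^sub>R i)) has_real_derivative D (i # ds) x) (at 0)))"

text \<open>Omega has smooth boundary and nu is its outer unit normal: near every boundary
  point p there is a smooth local defining function rho with nonvanishing gradient,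
  Omega = {rho < 0} locally, and nu p = grad rho p / |grad rho p|.\<close>
definition smooth_boundary_with_normal ::
  "'a::euclidean_space set \<Rightarrow> ('a \<Rightarrow> 'a) \<Rightarrow> bool" where
  "smooth_boundary_with_normal \<Omega> \<nu> \<longleftrightarrow>
     (\<forall>p\<in>frontier \<Omega>. \<exists>U \<rho> D\<rho>. open U \<and> p \<in> U \<and> smooth_on U \<rho> \<and>
        \<Omega> \<inter> U = {x\<in>U. \<rho> x < 0} \<and>
        (\<forall>x\<in>U. (\<rho> has_derivative (\<lambda>h. D\<rho> x \<bullet> h)) (at x) \<and> D\<rho> x \<noteq> 0) \<and>
        \<nu> p = (1 / norm (D\<rho> p)) *\<^sub>R D\<rho> p)"

definition C2_data :: "'a::euclidean_space set \<Rightarrow> ('a \<Rightarrow> real) \<Rightarrow> ('a \<Rightarrow> 'a)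
    \<Rightarrow> ('a \<Rightarrow> 'a \<Rightarrow> 'a) \<Rightarrow> bool" where
  "C2_data S \<phi> D\<phi> H\<phi> \<longleftrightarrow> open S \<and>
     (\<forall>x\<in>S. (\<phi> has_derivative (\<lambda>h. D\<phi> x \<bullet> h)) (at x) \<and> (D\<phi> has_derivative H\<phi> x) (at x)) \<and>
     continuous_on S D\<phi> \<and> (\<forall>v. continuous_on S (\<lambda>x. H\<phi> x v))"

text \<open>The operator E(s, xi, X), where q = <X xi, xi>: F if s > 0, G if s < 0, H if s = 0.\<close>
definition opE :: "real \<Rightarrow> real \<Rightarrow> 'a::euclidean_space \<Rightarrow> real \<Rightarrow> real" where
  "opE \<Lambda> s \<xi> q =
     (if s > 0 then min (norm \<xi> - \<Lambda> * \<bar>s\<bar>) (- q)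
      else if s < 0 then max (\<Lambda> * \<bar>s\<bar> - norm \<xi>) (- q)
      else - q)"

definition usc_on :: "'a::metric_space set \<Rightarrow> ('a \<Rightarrow> real) \<Rightarrow> bool" where
  "usc_on S u \<longleftrightarrow> (\<forall>x\<in>S. \<forall>e>0. \<exists>d>0. \<forall>y\<in>S. dist y x < d \<longrightarrow> u y < u x + e)"

definition lsc_on :: "'a::metric_space set \<Rightarrow> ('a \<Rightarrow> real) \<Rightarrow> bool" where
  "lsc_on S u \<longleftrightarrow> (\<forall>x\<in>S. \<forall>e>0. \<exists>d>0. \<forall>y\<in>S. dist y x < d \<longrightarrow> u y > u x - e)"

definition visc_subsolution ::
  "'a::euclidean_space set \<Rightarrow> ('a \<Rightarrow> 'a) \<Rightarrow> real \<Rightarrow> ('a \<Rightarrow> real) \<Rightarrow> bool" where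
  "visc_subsolution \<Omega> \<nu> \<Lambda> u \<longleftrightarrow>
     usc_on (closure \<Omega>) u \<and>
     (\<forall>x0\<in>\<Omega>. \<forall>\<phi> D\<phi> H\<phi>. C2_data \<Omega> \<phi> D\<phi> H\<phi> \<and> \<phi> x0 = u x0 \<and>
         (\<forall>x\<in>\<Omega>. x \<noteq> x0 \<longrightarrow> u x < \<phi> x) \<longrightarrow>
         opE \<Lambda> (\<phi> x0) (D\<phi> x0) (H\<phi> x0 (D\<phi> x0) \<bullet> D\<phi> x0) \<le> 0) \<and>
     (\<forall>x0\<in>frontier \<Omega>. \<forall>S \<phi> D\<phi> H\<phi>. closure \<Omega> \<subseteq> S \<and> C2_data S \<phi> D\<phi> H\<phi> \<and>
         \<phi> x0 = u x0 \<and> (\<forall>x\<in>closure \<Omega>. x \<noteq> x0 \<longrightarrow> u x < \<phi> x) \<longrightarrow>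
         min (opE \<Lambda> (\<phi> x0) (D\<phi> x0) (H\<phi> x0 (D\<phi> x0) \<bullet> D\<phi> x0)) (D\<phi> x0 \<bullet> \<nu> x0) \<le> 0)"

definition visc_supersolution ::
  "'a::euclidean_space set \<Rightarrow> ('a \<Rightarrow> 'a) \<Rightarrow> real \<Rightarrow> ('a \<Rightarrow> real) \<Rightarrow> bool" where
  "visc_supersolution \<Omega> \<nu> \<Lambda> u \<longleftrightarrow>
     lsc_on (closure \<Omega>) u \<and>
     (\<forall>x0\<in>\<Omega>. \<forall>\<phi> D\<phi> H\<phi>. C2_data \<Omega> \<phi> D\<phi> H\<phi> \<and> \<phi> x0 = u x0 \<and>
         (\<forall>x\<in>\<Omega>. x \<noteq> x0 \<longrightarrow> u x > \<phi> x) \<longrightarrow>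
         opE \<Lambda> (\<phi> x0) (D\<phi> x0) (H\<phi> x0 (D\<phi> x0) \<bullet> D\<phi> x0) \<ge> 0) \<and>
     (\<forall>x0\<in>frontier \<Omega>. \<forall>S \<phi> D\<phi> H\<phi>. closure \<Omega> \<subseteq> S \<and> C2_data S \<phi> D\<phi> H\<phi> \<and>
         \<phi> x0 = u x0 \<and> (\<forall>x\<in>closure \<Omega>. x \<noteq> x0 \<longrightarrow> u x > \<phi> x) \<longrightarrow>
         max (opE \<Lambda> (\<phi> x0) (D\<phi> x0) (H\<phi> x0 (D\<phi> x0) \<bullet> D\<phi> x0)) (D\<phi> x0 \<bullet> \<nu> x0) \<ge> 0)"

definition visc_solution ::
  "'a::euclidean_space set \<Rightarrow> ('a \<Rightarrow> 'a) \<Rightarrow> real \<Rightarrow> ('a \<Rightarrow> real) \<Rightarrow> bool" where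
  "visc_solution \<Omega> \<nu> \<Lambda> u \<longleftrightarrow> continuous_on (closure \<Omega>) u \<and>
     visc_subsolution \<Omega> \<nu> \<Lambda> u \<and> visc_supersolution \<Omega> \<nu> \<Lambda> u"

end

theory Submission
  imports Defs
begin

lemma sq_has_derivative:
  fixes z :: "'a::euclidean_space"
  shows "((\<lambda>x. (norm (x - z))^2) has_derivative (\<lambda>h. 2 * ((x - z) \<bullet> h))) (at x)"
proof -
  have "((\<lambda>x. (x - z) \<bullet> (x - z)) has_derivative (\<lambda>h. (x - z) \<bullet> h + h \<bullet> (x - z))) (at x)"
    by (auto intro!: derivative_eq_intros)
  then show ?thesis by (simp add: power2_norm_eq_inner inner_commute)
qed

lemma C2_radial:
  fixes z x0 :: "'a::euclidean_space"
  assumes d1: "\<And>s. s \<ge> 0 \<Longrightarrow> (K has_real_derivative K1 s) (at s)"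
      and d2: "\<And>s. s \<ge> 0 \<Longrightarrow> (K1 has_real_derivative K2 s) (at s)"
      and c2: "continuous_on {0..} K2"
  shows "C2_data UNIV (\<lambda>x. c + K ((norm (x - z))^2) + e * (norm (x - x0))^2)
          (\<lambda>x. (2 * K1 ((norm (x-z))^2)) *\<^sub>R (x - z) + (2*e) *\<^sub>R (x - x0))
          (\<lambda>x v. (4 * K2 ((norm (x-z))^2) * ((x - z) \<bullet> v)) *\<^sub>R (x - z) + (2 * K1 ((norm (x-z))^2)) *\<^sub>R v + (2*e) *\<^sub>R v)"
proof -
  let ?s = "\<lambda>x. (norm (x - z))^2"
  have s0: "?s x \<ge> 0" for x by simp
  have dK: "((\<lambda>x. K (?s x)) has_derivative (\<lambda>h. K1 (?s x) * (2 * ((x - z) \<bullet> h)))) (at x)" for x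
  proof -
    have "(K has_derivative (\<lambda>t. K1 (?s x) * t)) (at (?s x))"
      using d1[OF s0] by (simp add: has_field_derivative_def)
    from has_derivative_compose[OF sq_has_derivative this] show ?thesis by (simp add: o_def)
  qed
  have dK1: "((\<lambda>x. K1 (?s x)) has_derivative (\<lambda>h. K2 (?s x) * (2 * ((x - z) \<bullet> h)))) (at x)" for x
  proof -
    have "(K1 has_derivative (\<lambda>t. K2 (?s x) * t)) (at (?s x))"
      using d2[OF s0] by (simp add: has_field_derivative_def)
    from has_derivative_compose[OF sq_has_derivative this] show ?thesis by (simp add: o_def)
  qed
  have cK1: "continuous_on UNIV (\<lambda>x. K1 (?s x))"
    using dK1 by (meson continuous_at_imp_continuous_on has_derivative_continuous)
  have cK2: "continuous_on UNIV (\<lambda>x. K2 (?s x))"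
  proof -
    have "continuous_on UNIV ?s" by (intro continuous_intros)
    moreover have "?s ` UNIV \<subseteq> {0..}" by auto
    ultimately show ?thesis using continuous_on_compose2[OF c2] by blast
  qed
  show ?thesis
    unfolding C2_data_def
  proof (intro conjI ballI allI)
    show "open (UNIV::'a set)" by simp
  next
    fix x :: 'a
    have "((\<lambda>x. c + K (?s x) + e * (norm (x - x0))^2) has_derivative
       (\<lambda>h. 0 + K1 (?s x) * (2 * ((x - z) \<bullet> h)) + e * (2 * ((x - x0) \<bullet> h)))) (at x)"
      using has_derivative_add[OF has_derivative_add[OF has_derivative_const dK]
           has_derivative_mult_right[OF sq_has_derivative[of x0 x]], of c e] by simp
    then show "((\<lambda>x. c + K (?s x) + e * (norm (x - x0))^2) has_derivative
       (\<lambda>h. ((2 * K1 (?s x)) *\<^sub>R (x - z) + (2*e) *\<^sub>R (x - x0)) \<bullet> h)) (at x)"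
      by (simp add: inner_add_left algebra_simps)
  next
    fix x :: 'a
    have idz: "((\<lambda>x. x - z) has_derivative (\<lambda>h. h)) (at x)" for z :: 'a
      using has_derivative_diff[OF has_derivative_ident has_derivative_const] by simp
    have "((\<lambda>x. (2 * K1 (?s x)) *\<^sub>R (x - z) + (2*e) *\<^sub>R (x - x0)) has_derivative
       (\<lambda>h. ((2 * K1 (?s x)) *\<^sub>R h + (2 * (K2 (?s x) * (2 * ((x - z) \<bullet> h)))) *\<^sub>R (x - z))
           + ((2*e) *\<^sub>R h + 0 *\<^sub>R (x - x0)))) (at x)"
      by (rule has_derivative_add[OF has_derivative_scaleR[OF has_derivative_mult_right[OF dK1] idz]
            has_derivative_scaleR[OF has_derivative_const idz]])
    then show "((\<lambda>x. (2 * K1 (?s x)) *\<^sub>R (x - z) + (2*e) *\<^sub>R (x - x0)) has_derivative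
       (\<lambda>v. (4 * K2 (?s x) * ((x - z) \<bullet> v)) *\<^sub>R (x - z) + (2 * K1 (?s x)) *\<^sub>R v + (2*e) *\<^sub>R v)) (at x)"
      by (simp add: algebra_simps)
  next
    show "continuous_on UNIV (\<lambda>x. (2 * K1 (?s x)) *\<^sub>R (x - z) + (2*e) *\<^sub>R (x - x0))"
      using cK1 by (intro continuous_intros) auto
  next
    fix v :: 'a
    show "continuous_on UNIV (\<lambda>x. (4 * K2 (?s x) * ((x - z) \<bullet> v)) *\<^sub>R (x - z) + (2 * K1 (?s x)) *\<^sub>R v + (2*e) *\<^sub>R v)"
      using cK1 cK2 by (intro continuous_intros) auto
  qed
qed

lemma normal_pos:
  fixes \<Omega> :: "'a::euclidean_space set"
  assumes op: "open \<Omega>" and cv: "convex \<Omega>" and sb: "smooth_boundary_with_normal \<Omega> \<nu>"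
    and z: "z \<in> \<Omega>" and p: "p \<in> frontier \<Omega>"
  shows "(p - z) \<bullet> \<nu> p > 0"
proof -
  have "\<exists>U \<rho> D\<rho>. open U \<and> p \<in> U \<and> smooth_on U \<rho> \<and>
        \<Omega> \<inter> U = {x\<in>U. \<rho> x < 0} \<and>
        (\<forall>x\<in>U. (\<rho> has_derivative (\<lambda>h. D\<rho> x \<bullet> h)) (at x) \<and> D\<rho> x \<noteq> 0) \<and>
        \<nu> p = (1 / norm (D\<rho> p)) *\<^sub>R D\<rho> p"
    using sb p unfolding smooth_boundary_with_normal_def by (rule bspec)
  then obtain U \<rho> D\<rho> where U: "open U" "p \<in> U" and eq: "\<Omega> \<inter> U = {x\<in>U. \<rho> x < 0}"
    and der: "\<forall>x\<in>U. (\<rho> has_derivative (\<lambda>h. D\<rho> x \<bullet> h)) (at x) \<and> D\<rho> x \<noteq> 0"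
    and nu: "\<nu> p = (1 / norm (D\<rho> p)) *\<^sub>R D\<rho> p"
    by (elim exE conjE) 
  have pO: "p \<notin> \<Omega>" using p op by (simp add: frontier_def interior_open)
  have pc: "p \<in> closure \<Omega>" using p by (simp add: frontier_def)
  have rp: "\<rho> p \<ge> 0"
  proof (rule ccontr)
    assume "\<not> \<rho> p \<ge> 0"
    hence "p \<in> \<Omega> \<inter> U" using eq U(2) by auto
    thus False using pO by auto
  qed
  have dp: "(\<rho> has_derivative (\<lambda>h. D\<rho> p \<bullet> h)) (at p)" and Dnz: "D\<rho> p \<noteq> 0" using der U(2) by auto
  obtain e where e: "e > 0" "ball z e \<subseteq> \<Omega>" using op z openE by blast
  obtain \<epsilon> where eps: "\<epsilon> > 0" "ball p \<epsilon> \<subseteq> U" using U openE by blast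
  have key: "D\<rho> p \<bullet> (w - p) \<le> 0" if w: "w \<in> \<Omega>" for w
  proof (rule ccontr)
    assume "\<not> ?thesis"
    hence pos: "D\<rho> p \<bullet> (w - p) > 0" by simp
    define v where "v = w - p"
    have lin: "((\<lambda>t::real. p + t *\<^sub>R v) has_derivative (\<lambda>t. t *\<^sub>R v)) (at 0)"
      using has_derivative_add[OF has_derivative_const has_derivative_scaleR_left[OF has_derivative_ident]]
      by simp
    have "((\<lambda>t. \<rho> (p + t *\<^sub>R v)) has_derivative (\<lambda>t. D\<rho> p \<bullet> (t *\<^sub>R v))) (at 0)"
    proof -
      have dp0: "(\<rho> has_derivative (\<lambda>h. D\<rho> p \<bullet> h)) (at (p + 0 *\<^sub>R v))" using dp by simp
      from has_derivative_compose[OF lin dp0] show ?thesis by (simp add: o_def)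
    qed
    hence "((\<lambda>t. \<rho> (p + t *\<^sub>R v)) has_real_derivative (D\<rho> p \<bullet> v)) (at 0)"
      unfolding has_field_derivative_def by (simp add: mult.commute[of _ "D\<rho> p \<bullet> v"])
    from DERIV_pos_inc_right[OF this] pos obtain d where d: "d > 0"
      "\<And>h. h > 0 \<Longrightarrow> h < d \<Longrightarrow> \<rho> (p + 0 *\<^sub>R v) < \<rho> (p + (0 + h) *\<^sub>R v)"
      unfolding v_def by blast
    define h where "h = min (d/2) (min (\<epsilon> / (2 * (norm v + 1))) (1/2))"
    have h: "h > 0" "h < d" "h < 1" "h * norm v < \<epsilon>"
    proof -
      have nv: "2 * (norm v + 1) > 0" by (metis add_pos_nonneg norm_ge_zero zero_less_one mult_pos_pos zero_less_numeral add.commute)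
      have "\<epsilon> / (2 * (norm v + 1)) > 0" using divide_pos_pos[OF eps(1) nv] .
      thus "h > 0" "h < d" "h < 1" using d eps by (auto simp: h_def)
      have "h * norm v \<le> \<epsilon> / (2 * (norm v + 1)) * norm v"
        by (rule mult_right_mono) (auto simp: h_def)
      also have "\<dots> \<le> \<epsilon> / 2"
      proof -
        have "\<epsilon> / (2 * (norm v + 1)) * norm v = (\<epsilon>/2) * (norm v / (norm v + 1))" by simp
        also have "\<dots> \<le> (\<epsilon>/2) * 1"
        proof (intro mult_left_mono)
          have "norm v + 1 > 0" "norm v \<le> norm v + 1" using nv by auto
          thus "norm v / (norm v + 1) \<le> 1" by (simp add: divide_le_eq_1)
        qed (use eps in auto)
        finally show ?thesis by simp
      qed
      also have "\<dots> < \<epsilon>" using eps by simp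
      finally show "h * norm v < \<epsilon>" .
    qed
    have "\<rho> p < \<rho> (p + h *\<^sub>R v)" using d(2)[OF h(1) h(2)] by simp
    moreover have inU: "p + h *\<^sub>R v \<in> U"
      using eps h(4) h(1) by (intro subsetD[OF eps(2)]) (simp add: dist_norm)
    moreover have "p + h *\<^sub>R v \<in> \<Omega>"
    proof -
      have "open_segment w p \<subseteq> interior \<Omega>"
        using in_interior_closure_convex_segment[OF cv _ pc] w op by (simp add: interior_open)
      moreover have "p + h *\<^sub>R v \<in> open_segment w p"
      proof -
        have "w \<noteq> p" using w pO by auto
        moreover have "p + h *\<^sub>R v = (1 - (1 - h)) *\<^sub>R w + (1 - h) *\<^sub>R p"
          by (simp add: v_def algebra_simps)
        ultimately show ?thesis using h unfolding in_segment
          by (intro conjI exI[of _ "1 - h"]) auto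
      qed
      ultimately show ?thesis using op by (auto simp: interior_open)
    qed
    ultimately have "\<rho> (p + h *\<^sub>R v) < 0" "\<rho> p < \<rho> (p + h *\<^sub>R v)" using eq by blast+
    thus False using rp by simp
  qed
  define w where "w = z + (e/2) *\<^sub>R ((1 / norm (D\<rho> p)) *\<^sub>R D\<rho> p)"
  have "w \<in> ball z e" using e Dnz by (simp add: w_def dist_norm)
  hence "D\<rho> p \<bullet> (w - p) \<le> 0" using key e by blast
  moreover have "D\<rho> p \<bullet> (w - p) = D\<rho> p \<bullet> (z - p) + (e/2) * norm (D\<rho> p)"
  proof -
    have "D\<rho> p \<bullet> (w - p) = D\<rho> p \<bullet> (z - p) + (e/2) * (1 / norm (D\<rho> p)) * (D\<rho> p \<bullet> D\<rho> p)"
      by (simp add: w_def inner_add_right inner_diff_right algebra_simps)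
    also have "D\<rho> p \<bullet> D\<rho> p = norm (D\<rho> p) * norm (D\<rho> p)"
      by (simp add: power2_norm_eq_inner[symmetric] power2_eq_square)
    finally show ?thesis using Dnz by simp
  qed
  ultimately have "D\<rho> p \<bullet> (z - p) + (e/2) * norm (D\<rho> p) \<le> 0" by simp
  moreover have "(e/2) * norm (D\<rho> p) > 0" using e Dnz by simp
  ultimately have "D\<rho> p \<bullet> (p - z) > 0"
    by (simp add: inner_diff_right)
  thus ?thesis using nu Dnz by (simp add: inner_commute)
qed

lemma opE_neg: "opE \<Lambda> (-s) (-\<xi>) (-q) = - opE \<Lambda> s \<xi> q"
  by (auto simp: opE_def min_def max_def)

lemma C2_neg:
  assumes "C2_data S \<phi> D\<phi> H\<phi>"
  shows "C2_data S (\<lambda>x. - \<phi> x) (\<lambda>x. - D\<phi> x) (\<lambda>x v. - H\<phi> x v)"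
  using assms unfolding C2_data_def
proof (intro conjI ballI allI)
  assume A: "open S \<and>
    (\<forall>x\<in>S. (\<phi> has_derivative (\<bullet>) (D\<phi> x)) (at x) \<and> (D\<phi> has_derivative H\<phi> x) (at x)) \<and>
    continuous_on S D\<phi> \<and> (\<forall>v. continuous_on S (\<lambda>x. H\<phi> x v))"
  show "open S" using A by simp
  fix x assume x: "x \<in> S"
  have "((\<lambda>x. - \<phi> x) has_derivative (\<lambda>h. - (D\<phi> x \<bullet> h))) (at x)"
    using A x by (intro has_derivative_minus) auto
  moreover have "(\<bullet>) (- D\<phi> x) = (\<lambda>h. - (D\<phi> x \<bullet> h))" by (rule ext) simp
  ultimately show "((\<lambda>x. - \<phi> x) has_derivative (\<bullet>) (- D\<phi> x)) (at x)" by simp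
  show "((\<lambda>x. - D\<phi> x) has_derivative (\<lambda>v. - H\<phi> x v)) (at x)"
    using A x by (intro has_derivative_minus) auto
next
  assume A: "open S \<and>
    (\<forall>x\<in>S. (\<phi> has_derivative (\<bullet>) (D\<phi> x)) (at x) \<and> (D\<phi> has_derivative H\<phi> x) (at x)) \<and>
    continuous_on S D\<phi> \<and> (\<forall>v. continuous_on S (\<lambda>x. H\<phi> x v))"
  show "continuous_on S (\<lambda>x. - D\<phi> x)" using A by (intro continuous_intros) auto
  fix v show "continuous_on S (\<lambda>x. - H\<phi> x v)" using A by (intro continuous_intros) auto
qed

lemma C2_quad_neg:
  assumes "C2_data S \<phi> D\<phi> H\<phi>" "x \<in> S"
  shows "(- H\<phi> x (- D\<phi> x)) \<bullet> (- D\<phi> x) = - (H\<phi> x (D\<phi> x) \<bullet> D\<phi> x)"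
proof -
  have "linear (H\<phi> x)" using assms unfolding C2_data_def
    by (meson has_derivative_linear)
  hence "H\<phi> x (- D\<phi> x) = - H\<phi> x (D\<phi> x)" by (simp add: linear_neg)
  thus ?thesis by simp
qed

lemma super_neg_sub:
  assumes "visc_supersolution \<Omega> \<nu> \<Lambda> u"
  shows "visc_subsolution \<Omega> \<nu> \<Lambda> (\<lambda>x. - u x)"
  unfolding visc_subsolution_def
proof (intro conjI ballI allI impI)
  show "usc_on (closure \<Omega>) (\<lambda>x. - u x)"
    using assms unfolding visc_supersolution_def usc_on_def lsc_on_def
    by (metis neg_less_iff_less minus_diff_eq diff_conv_add_uminus add.commute)
next
  fix x0 \<phi> D\<phi> H\<phi>
  assume x0: "x0 \<in> \<Omega>" and T: "C2_data \<Omega> \<phi> D\<phi> H\<phi> \<and> \<phi> x0 = - u x0 \<and> (\<forall>x\<in>\<Omega>. x \<noteq> x0 \<longrightarrow> - u x < \<phi> x)"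
  have "opE \<Lambda> (- \<phi> x0) (- D\<phi> x0) ((- H\<phi> x0 (- D\<phi> x0)) \<bullet> (- D\<phi> x0)) \<ge> 0"
    using assms x0 T C2_neg[of \<Omega> \<phi> D\<phi> H\<phi>] unfolding visc_supersolution_def
    by (smt (verit, best))
  hence "- opE \<Lambda> (\<phi> x0) (D\<phi> x0) (H\<phi> x0 (D\<phi> x0) \<bullet> D\<phi> x0) \<ge> 0"
    using C2_quad_neg[of \<Omega> \<phi> D\<phi> H\<phi> x0] T x0 by (simp add: opE_neg[symmetric])
  thus "opE \<Lambda> (\<phi> x0) (D\<phi> x0) (H\<phi> x0 (D\<phi> x0) \<bullet> D\<phi> x0) \<le> 0" by simp
next
  fix x0 S \<phi> D\<phi> H\<phi>
  assume x0: "x0 \<in> frontier \<Omega>" and T: "closure \<Omega> \<subseteq> S \<and> C2_data S \<phi> D\<phi> H\<phi> \<and> \<phi> x0 = - u x0 \<and>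
     (\<forall>x\<in>closure \<Omega>. x \<noteq> x0 \<longrightarrow> - u x < \<phi> x)"
  have xS: "x0 \<in> S" using x0 T by (auto simp: frontier_def)
  have "max (opE \<Lambda> (- \<phi> x0) (- D\<phi> x0) ((- H\<phi> x0 (- D\<phi> x0)) \<bullet> (- D\<phi> x0))) ((- D\<phi> x0) \<bullet> \<nu> x0) \<ge> 0"
    using assms x0 T C2_neg[of S \<phi> D\<phi> H\<phi>] unfolding visc_supersolution_def
    by (smt (verit, best))
  hence "max (- opE \<Lambda> (\<phi> x0) (D\<phi> x0) (H\<phi> x0 (D\<phi> x0) \<bullet> D\<phi> x0)) (- (D\<phi> x0 \<bullet> \<nu> x0)) \<ge> 0"
    using C2_quad_neg[of S \<phi> D\<phi> H\<phi> x0] T xS by (simp add: opE_neg[symmetric])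
  thus "min (opE \<Lambda> (\<phi> x0) (D\<phi> x0) (H\<phi> x0 (D\<phi> x0) \<bullet> D\<phi> x0)) (D\<phi> x0 \<bullet> \<nu> x0) \<le> 0"
    by linarith
qed

lemma opE_shift: "t \<ge> 0 \<Longrightarrow> opE \<Lambda> s \<xi> (q + t) \<ge> opE \<Lambda> s \<xi> q - t"
  by (auto simp: opE_def min_def max_def)

lemma C2_mono: "C2_data UNIV \<phi> D\<phi> H\<phi> \<Longrightarrow> open S \<Longrightarrow> C2_data S \<phi> D\<phi> H\<phi>"
  unfolding C2_data_def by (auto intro: continuous_on_subset)

lemma core:
  fixes \<Omega> :: "'a::euclidean_space set"
  assumes op: "open \<Omega>" and cv: "convex \<Omega>" and sb: "smooth_boundary_with_normal \<Omega> \<nu>"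
    and sub: "visc_subsolution \<Omega> \<nu> \<Lambda> u"
    and z: "z \<in> \<Omega>"
    and d1: "\<And>s. s \<ge> 0 \<Longrightarrow> (K has_real_derivative K1 s) (at s)"
    and d2: "\<And>s. s \<ge> 0 \<Longrightarrow> (K1 has_real_derivative K2 s) (at s)"
    and c2: "continuous_on {0..} K2"
    and x0: "x0 \<in> closure \<Omega>"
    and mx: "\<forall>x\<in>closure \<Omega>. u x - K ((norm (x - z))^2) \<le> u x0 - K ((norm (x0 - z))^2)"
    and kp: "K1 ((norm (x0 - z))^2) > 0"
    and E: "opE \<Lambda> (u x0) ((2 * K1 ((norm (x0 - z))^2)) *\<^sub>R (x0 - z))
              (8 * (K1 ((norm (x0 - z))^2))^2 * (norm (x0 - z))^2 *
                 (2 * K2 ((norm (x0 - z))^2) * (norm (x0 - z))^2 + K1 ((norm (x0 - z))^2))) > 0"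
  shows False
proof -
  define \<sigma> where "\<sigma> = (norm (x0 - z))^2"
  define k1 where "k1 = K1 \<sigma>"
  define k2 where "k2 = K2 \<sigma>"
  define \<xi> where "\<xi> = (2 * k1) *\<^sub>R (x0 - z)"
  define q0 where "q0 = 8 * k1^2 * \<sigma> * (2 * k2 * \<sigma> + k1)"
  define E0 where "E0 = opE \<Lambda> (u x0) \<xi> q0"
  have E0: "E0 > 0" using E by (simp add: E0_def \<xi>_def q0_def k1_def k2_def \<sigma>_def)
  have s0: "\<sigma> \<ge> 0" by (simp add: \<sigma>_def)
  define A where "A = 8 * k1^2 * \<sigma>"
  have A0: "A \<ge> 0" using s0 by (simp add: A_def)
  define e where "e = E0 / (2 * (A + 1))"
  have e0: "e > 0" using E0 A0 by (simp add: e_def)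
  have eA: "e * A < E0"
  proof -
    have "e * A = E0 * (A / (2 * (A + 1)))" by (simp add: e_def)
    also have "\<dots> < E0 * 1"
      using E0 A0 by (intro mult_strict_left_mono) (auto simp: field_simps)
    finally show ?thesis by simp
  qed
  define c where "c = u x0 - K \<sigma>"
  define \<phi> where "\<phi> = (\<lambda>x. c + K ((norm (x - z))^2) + e * (norm (x - x0))^2)"
  define D\<phi> where "D\<phi> = (\<lambda>x. (2 * K1 ((norm (x-z))^2)) *\<^sub>R (x - z) + (2*e) *\<^sub>R (x - x0))"
  define H\<phi> where "H\<phi> = (\<lambda>x v. (4 * K2 ((norm (x-z))^2) * ((x - z) \<bullet> v)) *\<^sub>R (x - z) + (2 * K1 ((norm (x-z))^2)) *\<^sub>R v + (2*e) *\<^sub>R v)"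
  have C2: "C2_data UNIV \<phi> D\<phi> H\<phi>"
    unfolding \<phi>_def D\<phi>_def H\<phi>_def by (rule C2_radial[OF d1 d2 c2])
  have Dx0: "D\<phi> x0 = \<xi>" by (simp add: D\<phi>_def \<xi>_def k1_def \<sigma>_def)
  have px0: "\<phi> x0 = u x0" by (simp add: \<phi>_def c_def \<sigma>_def)
  have touch: "u x < \<phi> x" if "x \<in> closure \<Omega>" "x \<noteq> x0" for x
  proof -
    have "u x - K ((norm (x - z))^2) \<le> u x0 - K \<sigma>" using mx that by (simp add: \<sigma>_def)
    hence "u x \<le> c + K ((norm (x - z))^2)" by (simp add: c_def)
    moreover have "e * (norm (x - x0))^2 > 0" using e0 that by simp
    ultimately show ?thesis by (simp add: \<phi>_def)
  qed
  have q: "H\<phi> x0 (D\<phi> x0) \<bullet> D\<phi> x0 = q0 + e * A"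
  proof -
    have sig: "\<sigma> = (x0 - z) \<bullet> (x0 - z)" by (simp add: \<sigma>_def power2_norm_eq_inner)
    have i1: "(x0 - z) \<bullet> \<xi> = 2 * k1 * \<sigma>"
      by (simp add: \<xi>_def sig)
    have i2: "\<xi> \<bullet> \<xi> = 4 * k1^2 * \<sigma>"
      by (simp add: \<xi>_def sig power2_eq_square)
    have "H\<phi> x0 (D\<phi> x0) \<bullet> D\<phi> x0 = 4 * k2 * ((x0 - z) \<bullet> \<xi>) * ((x0 - z) \<bullet> \<xi>) + (2 * k1 + 2 * e) * (\<xi> \<bullet> \<xi>)"
      unfolding Dx0 by (simp add: H\<phi>_def k1_def k2_def \<sigma>_def inner_add_left algebra_simps inner_commute)
    also have "\<dots> = q0 + e * A"
      unfolding i1 i2 by (simp add: q0_def A_def power2_eq_square algebra_simps)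
    finally show ?thesis .
  qed
  have Epos: "opE \<Lambda> (\<phi> x0) (D\<phi> x0) (H\<phi> x0 (D\<phi> x0) \<bullet> D\<phi> x0) > 0"
  proof -
    have "opE \<Lambda> (u x0) \<xi> (q0 + e * A) \<ge> E0 - e * A"
      unfolding E0_def by (rule opE_shift) (use e0 A0 in simp)
    moreover have "opE \<Lambda> (\<phi> x0) (D\<phi> x0) (H\<phi> x0 (D\<phi> x0) \<bullet> D\<phi> x0) = opE \<Lambda> (u x0) \<xi> (q0 + e * A)"
      unfolding q by (simp only: px0 Dx0)
    ultimately show ?thesis using eA by linarith
  qed
  show False
  proof (cases "x0 \<in> \<Omega>")
    case True
    have "C2_data \<Omega> \<phi> D\<phi> H\<phi>" using C2_mono[OF C2 op] .
    hence "opE \<Lambda> (\<phi> x0) (D\<phi> x0) (H\<phi> x0 (D\<phi> x0) \<bullet> D\<phi> x0) \<le> 0"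
      using sub True px0 touch closure_subset unfolding visc_subsolution_def by blast
    thus False using Epos by simp
  next
    case False
    hence fr: "x0 \<in> frontier \<Omega>" using x0 op by (simp add: frontier_def interior_open)
    have "min (opE \<Lambda> (\<phi> x0) (D\<phi> x0) (H\<phi> x0 (D\<phi> x0) \<bullet> D\<phi> x0)) (D\<phi> x0 \<bullet> \<nu> x0) \<le> 0"
      using sub fr C2 px0 touch unfolding visc_subsolution_def by blast
    moreover have "D\<phi> x0 \<bullet> \<nu> x0 > 0"
    proof -
      have "(x0 - z) \<bullet> \<nu> x0 > 0" by (rule normal_pos[OF op cv sb z fr])
      moreover have "k1 > 0" using kp by (simp add: k1_def \<sigma>_def)
      ultimately show ?thesis by (simp add: Dx0 \<xi>_def)
    qed
    ultimately show False using Epos by simp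
  qed
qed

lemma opE_pos_q: "q < 0 \<Longrightarrow> (s > 0 \<longrightarrow> norm \<xi> > \<Lambda> * \<bar>s\<bar>) \<Longrightarrow> opE \<Lambda> s \<xi> q > 0"
  by (auto simp: opE_def)

lemma opE_pos_neg: "s < 0 \<Longrightarrow> \<Lambda> * \<bar>s\<bar> > norm \<xi> \<Longrightarrow> opE \<Lambda> s \<xi> q > 0"
  by (auto simp: opE_def)

lemma approx_interior:
  fixes \<Omega> :: "'a::euclidean_space set"
    and f :: "'a \<Rightarrow> real"
  assumes "continuous_on (closure \<Omega>) f" "p \<in> closure \<Omega>" "f p < 0"
  shows "\<exists>z\<in>\<Omega>. f z < 0"
proof -
  obtain d where d: "d > 0" "\<forall>x\<in>closure \<Omega>. dist x p < d \<longrightarrow> dist (f x) (f p) < - f p"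
    using assms unfolding continuous_on_iff by (metis neg_0_less_iff_less)
  obtain z where z: "z \<in> \<Omega>" "dist z p < d" using assms(2) d(1) closure_approachable by metis
  have "dist (f z) (f p) < - f p" using d z closure_subset by blast
  hence "f z < 0" by (simp add: dist_real_def) 
  thus ?thesis using z by blast
qed

lemma Kneg_deriv:
  fixes \<beta> h :: real assumes h: "h > 0" and s: "s \<ge> 0"
  shows "((\<lambda>s. - \<beta> / (s + h)) has_real_derivative \<beta> / (s + h)^2) (at s)"
    and "((\<lambda>s. \<beta> / (s + h)^2) has_real_derivative - 2 * \<beta> / (s + h)^3) (at s)"
proof -
  have ne: "s + h \<noteq> 0" using h s by simp
  show "((\<lambda>s. - \<beta> / (s + h)) has_real_derivative \<beta> / (s + h)^2) (at s)"
    using ne by (auto intro!: derivative_eq_intros simp: field_simps power2_eq_square)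
  show "((\<lambda>s. \<beta> / (s + h)^2) has_real_derivative - 2 * \<beta> / (s + h)^3) (at s)"
  proof -
    have "((\<lambda>s. \<beta> / (s + h)^2) has_real_derivative (0 * (s+h)^2 - \<beta> * (of_nat 2 * (s+h)^(2-1) * (1 + 0))) / ((s+h)^2 * (s+h)^2)) (at s)"
      using ne by (intro derivative_eq_intros) auto
    moreover have "(0 * (s+h)^2 - \<beta> * (of_nat 2 * (s+h)^(2-1) * (1 + 0))) / ((s+h)^2 * (s+h)^2) = - 2 * \<beta> / (s + h)^3"
    proof -
      define t where "t = s + h"
      have "t \<noteq> 0" using ne by (simp add: t_def)
      thus ?thesis unfolding t_def[symmetric] by (simp add: field_simps power2_eq_square power3_eq_cube)
    qed
    ultimately show ?thesis by simp
  qed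
qed

lemma no_neg_solution:
  fixes \<Omega> :: "'a::euclidean_space set"
  assumes op: "open \<Omega>" and cv: "convex \<Omega>" and bd: "bounded \<Omega>"
    and sb: "smooth_boundary_with_normal \<Omega> \<nu>"
    and sub: "visc_subsolution \<Omega> \<nu> \<Lambda> u" and cont: "continuous_on (closure \<Omega>) u"
    and L: "\<Lambda> > 0" and le: "\<forall>x\<in>closure \<Omega>. u x \<le> 0"
    and p: "p \<in> closure \<Omega>" "u p < 0"
  shows False
proof -
  obtain z where z: "z \<in> \<Omega>" "u z < 0" using approx_interior[OF cont p] by blast
  define \<mu> where "\<mu> = - u z / 2"
  have mu: "\<mu> > 0" using z by (simp add: \<mu>_def)
  have zc: "z \<in> closure \<Omega>" using z closure_subset by blast
  obtain d0 where d0: "d0 > 0" "\<forall>x\<in>closure \<Omega>. dist x z < d0 \<longrightarrow> dist (u x) (u z) < \<mu>"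
  proof -
    have "\<exists>d>0. \<forall>x\<in>closure \<Omega>. dist x z < d \<longrightarrow> dist (u x) (u z) < \<mu>"
      using cont zc mu unfolding continuous_on_iff by blast
    thus ?thesis using that by blast
  qed
  define \<delta> where "\<delta> = min d0 1"
  have del: "\<delta> > 0" "\<delta> \<le> 1" "\<delta> \<le> d0" using d0 by (auto simp: \<delta>_def)
  define h where "h = \<delta>^2"
  have h0: "h > 0" using del by (simp add: h_def)
  define \<beta> where "\<beta> = \<Lambda> * \<mu> * h^2 / 4"
  have b0: "\<beta> > 0" using L mu h0 by (simp add: \<beta>_def)
  define K where "K = (\<lambda>s::real. - \<beta> / (s + h))"
  define K1 where "K1 = (\<lambda>s::real. \<beta> / (s + h)^2)"
  define K2 where "K2 = (\<lambda>s::real. - 2 * \<beta> / (s + h)^3)"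
  have d1: "\<And>s. s \<ge> 0 \<Longrightarrow> (K has_real_derivative K1 s) (at s)"
    unfolding K_def K1_def using Kneg_deriv(1)[OF h0] by blast
  have d2: "\<And>s. s \<ge> 0 \<Longrightarrow> (K1 has_real_derivative K2 s) (at s)"
    unfolding K1_def K2_def using Kneg_deriv(2)[OF h0] by blast
  have c2: "continuous_on {0..} K2"
    unfolding K2_def using h0 by (intro continuous_intros) (auto simp: add_nonneg_pos)
  define g where "g = (\<lambda>x. u x - K ((norm (x - z))^2))"
  have nz: "(norm (x - z))^2 + h \<noteq> 0" for x using h0 by (smt (verit) zero_le_power2)
  have cg: "continuous_on (closure \<Omega>) g"
    unfolding g_def K_def using cont h0 nz
    by (intro continuous_intros) (auto intro: continuous_on_subset simp: add_nonneg_pos)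
  have cpt: "compact (closure \<Omega>)" using bd by (simp add: compact_closure)
  have ne: "closure \<Omega> \<noteq> {}" using zc by auto
  obtain x0 where x0: "x0 \<in> closure \<Omega>" "\<forall>y\<in>closure \<Omega>. g y \<le> g x0"
    using continuous_attains_sup[OF cpt ne cg] by blast
  define \<sigma> where "\<sigma> = (norm (x0 - z))^2"
  have s0: "\<sigma> \<ge> 0" by (simp add: \<sigma>_def)
  have sh: "\<sigma> + h > 0" using s0 h0 by simp
  have k1p: "K1 \<sigma> > 0" using b0 sh by (simp add: K1_def)
  show False
  proof (rule core[OF op cv sb sub z(1) d1 d2 c2 x0(1)])
    show "\<forall>x\<in>closure \<Omega>. u x - K ((norm (x - z))^2) \<le> u x0 - K ((norm (x0 - z))^2)"
      using x0 by (simp add: g_def)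
    show "K1 ((norm (x0 - z))^2) > 0" using k1p by (simp add: \<sigma>_def)
    define \<xi> where "\<xi> = (2 * K1 \<sigma>) *\<^sub>R (x0 - z)"
    define q where "q = 8 * (K1 \<sigma>)^2 * \<sigma> * (2 * K2 \<sigma> * \<sigma> + K1 \<sigma>)"
    have "opE \<Lambda> (u x0) \<xi> q > 0"
    proof (cases "norm (x0 - z) < \<delta>")
      case True
      have ux: "u x0 < - \<mu>"
      proof -
        have "dist (u x0) (u z) < \<mu>" using d0(2) x0(1) True del by (simp add: dist_norm)
        thus ?thesis by (simp add: dist_real_def \<mu>_def)
      qed
      have "norm \<xi> \<le> \<Lambda> * \<mu> / 2"
      proof -
        have "norm \<xi> = 2 * K1 \<sigma> * norm (x0 - z)" using k1p by (simp add: \<xi>_def)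
        also have "\<dots> \<le> 2 * (\<beta> / h^2) * 1"
        proof (intro mult_mono mult_left_mono)
          have "(s0' + h)^2 \<ge> h^2" if "s0' \<ge> 0" for s0' using that h0 by (intro power_mono) auto
          hence "h^2 \<le> (\<sigma> + h)^2" using s0 by blast
          thus "K1 \<sigma> \<le> \<beta> / h^2" unfolding K1_def using b0 h0 sh by (intro divide_left_mono) auto
          show "norm (x0 - z) \<le> 1" using True del by simp
        qed (use b0 h0 k1p in auto)
        also have "\<dots> = \<Lambda> * \<mu> / 2" using h0 by (simp add: \<beta>_def)
        finally show ?thesis .
      qed
      moreover have "\<Lambda> * \<bar>u x0\<bar> > \<Lambda> * \<mu>" using ux L mu by (intro mult_strict_left_mono) auto
      moreover have "\<Lambda> * \<mu> > 0" using L mu by simp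
      ultimately show ?thesis using ux mu by (intro opE_pos_neg) auto
    next
      case False
      have "\<sigma> \<ge> h" unfolding \<sigma>_def h_def using False del by (intro power_mono) auto
      have "2 * K2 \<sigma> * \<sigma> + K1 \<sigma> = \<beta> * (h - 3 * \<sigma>) / (\<sigma> + h)^3"
      proof -
        have gen: "\<And>t. t \<noteq> 0 \<Longrightarrow> 2 * (- 2 * \<beta> / t^3) * \<sigma> + \<beta> / t^2 = \<beta> * (t - 4 * \<sigma>) / t^3"
          by (simp add: field_simps power2_eq_square power3_eq_cube)
        have "\<sigma> + h \<noteq> 0" using sh by simp
        from gen[OF this] show ?thesis by (simp add: K1_def K2_def algebra_simps)
      qed
      also have "\<dots> < 0" using \<open>\<sigma> \<ge> h\<close> h0 b0 sh by (intro divide_neg_pos mult_pos_neg) auto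
      finally have "2 * K2 \<sigma> * \<sigma> + K1 \<sigma> < 0" .
      moreover have "\<sigma> > 0" using \<open>\<sigma> \<ge> h\<close> h0 by simp
      ultimately have "q < 0" using k1p by (simp add: q_def mult_pos_neg)
      thus ?thesis using le x0(1) by (intro opE_pos_q) auto
    qed
    thus "opE \<Lambda> (u x0) ((2 * K1 ((norm (x0 - z))^2)) *\<^sub>R (x0 - z))
              (8 * (K1 ((norm (x0 - z))^2))^2 * (norm (x0 - z))^2 *
                 (2 * K2 ((norm (x0 - z))^2) * (norm (x0 - z))^2 + K1 ((norm (x0 - z))^2))) > 0"
      by (simp add: \<xi>_def q_def \<sigma>_def)
  qed
qed

lemma Ksq_deriv:
  fixes a b h :: real assumes h: "h > 0" and s: "s \<ge> 0"
  shows "((\<lambda>s. a * sqrt (s + h) - b * s) has_real_derivative a / (2 * sqrt (s + h)) - b) (at s)"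
    and "((\<lambda>s. a / (2 * sqrt (s + h)) - b) has_real_derivative - a / (4 * (s + h) * sqrt (s + h))) (at s)"
proof -
  have p: "s + h > 0" using h s by simp
  define t where "t = sqrt (s + h)"
  have t: "t > 0" "t * t = s + h" using p by (auto simp: t_def)
  have d0: "((\<lambda>s. s + h) has_real_derivative 1) (at s)"
    using DERIV_add[OF DERIV_ident DERIV_const[of h]] by simp
  have "(sqrt has_real_derivative inverse (sqrt (s+h)) / 2) (at (s+h))"
    by (rule DERIV_real_sqrt) (use p in simp)
  from DERIV_chain2[OF this d0] have dsq: "((\<lambda>s. sqrt (s + h)) has_real_derivative inverse (sqrt (s+h)) / 2 * 1) (at s)" .
  show "((\<lambda>s. a * sqrt (s + h) - b * s) has_real_derivative a / (2 * sqrt (s + h)) - b) (at s)"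
  proof -
    from DERIV_diff[OF DERIV_cmult[OF dsq, of a] DERIV_cmult[OF DERIV_ident, of b]]
    have "((\<lambda>s. a * sqrt (s + h) - b * s) has_real_derivative a * (inverse (sqrt (s+h)) / 2 * 1) - b * 1) (at s)" .
    thus ?thesis by (simp add: field_simps)
  qed
  have "((\<lambda>s. inverse (2 * sqrt (s + h))) has_real_derivative - ((2 * (inverse (sqrt (s+h)) / 2 * 1)) * inverse ((2 * sqrt (s + h)) ^ Suc (Suc 0)))) (at s)"
    by (rule DERIV_inverse_fun[OF DERIV_cmult[OF dsq, of 2]]) (use p in simp)
  from DERIV_diff[OF DERIV_cmult[OF this, of a] DERIV_const[of b]]
  have D1: "((\<lambda>s. a * inverse (2 * sqrt (s + h)) - b) has_real_derivative a * (- ((2 * (inverse (sqrt (s+h)) / 2 * 1)) * inverse ((2 * sqrt (s + h)) ^ Suc (Suc 0)))) - 0) (at s)" .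
  have EQ: "a * (- ((2 * (inverse (sqrt (s+h)) / 2 * 1)) * inverse ((2 * sqrt (s + h)) ^ Suc (Suc 0)))) - 0
     = - a / (4 * (s + h) * sqrt (s + h))"
  proof -
    have gen: "\<And>t::real. t > 0 \<Longrightarrow> a * (- ((2 * (inverse t / 2 * 1)) * inverse ((2 * t) ^ Suc (Suc 0)))) - 0 = - a / (4 * (t * t) * t)"
      by (simp add: field_simps)
    have sp: "sqrt (s + h) > 0" using p by simp
    have ss: "sqrt (s + h) * sqrt (s + h) = s + h" using p by simp
    show ?thesis using gen[OF sp] by (simp only: ss)
  qed
  have FE: "(\<lambda>s. a * inverse (2 * sqrt (s + h)) - b) = (\<lambda>s. a / (2 * sqrt (s + h)) - b)"
    by (simp only: divide_inverse)
  show "((\<lambda>s. a / (2 * sqrt (s + h)) - b) has_real_derivative - a / (4 * (s + h) * sqrt (s + h))) (at s)"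
    using D1 unfolding EQ FE .
qed

lemma max_bound_int:
  fixes \<Omega> :: "'a::euclidean_space set"
  assumes op: "open \<Omega>" and cv: "convex \<Omega>" and bd: "bounded \<Omega>"
    and sb: "smooth_boundary_with_normal \<Omega> \<nu>"
    and sub: "visc_subsolution \<Omega> \<nu> \<Lambda> u" and cont: "continuous_on (closure \<Omega>) u"
    and L: "\<Lambda> \<ge> 0" and xm: "xmax \<in> closure \<Omega>" and mx: "\<forall>x\<in>closure \<Omega>. u x \<le> u xmax"
    and Mp: "u xmax > 0"
    and z: "z \<in> \<Omega>" and lt: "u z < u xmax - \<Lambda> * u xmax * dist xmax z"
  shows False
proof -
  define M where "M = u xmax"
  define r where "r = norm (xmax - z)"
  have r0: "r \<ge> 0" by (simp add: r_def)
  have rd: "dist xmax z = r" by (simp add: r_def dist_norm)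
  define \<gamma> where "\<gamma> = M - \<Lambda> * M * r - u z"
  have g0: "\<gamma> > 0" using lt rd by (simp add: \<gamma>_def M_def)
  have zc: "z \<in> closure \<Omega>" using z closure_subset by blast
  define D where "D = diameter (closure \<Omega>)"
  have bK: "bounded (closure \<Omega>)" using bd by (rule bounded_closure)
  have Dist: "norm (x - z) \<le> D" if "x \<in> closure \<Omega>" for x
    using diameter_bounded_bound[OF bK that zc] by (simp add: D_def dist_norm)
  have D0: "D \<ge> 0" using Dist[OF zc] by simp
  have LM: "\<Lambda> * M \<ge> 0" using L Mp by (simp add: M_def)
  define \<theta> where "\<theta> = \<gamma> / (4 * (r + 1))"
  have th0: "\<theta> > 0" using g0 r0 by (simp add: \<theta>_def)
  have thr: "\<theta> * r < \<gamma> / 4"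
  proof -
    have "\<theta> * r = (\<gamma> / 4) * (r / (r + 1))" using r0 by (simp add: \<theta>_def)
    also have "\<dots> < (\<gamma> / 4) * 1" using g0 r0 by (intro mult_strict_left_mono) auto
    finally show ?thesis by simp
  qed
  define a where "a = \<Lambda> * M + \<theta>"
  have a0: "a > 0" using LM th0 by (simp add: a_def)
  obtain d0 where d0: "d0 > 0" "\<forall>x\<in>closure \<Omega>. dist x z < d0 \<longrightarrow> dist (u x) (u z) < \<gamma> / 2"
  proof -
    have "\<gamma> / 2 > 0" using g0 by simp
    hence "\<exists>d>0. \<forall>x\<in>closure \<Omega>. dist x z < d \<longrightarrow> dist (u x) (u z) < \<gamma> / 2"
      using cont zc unfolding continuous_on_iff by blast
    thus ?thesis using that by blast
  qed
  define \<delta> where "\<delta> = min d0 1"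
  have del: "\<delta> > 0" "\<delta> \<le> 1" "\<delta> \<le> d0" using d0 by (auto simp: \<delta>_def)
  define b where "b = min (\<theta> / (8 * (D + 1))) (\<gamma> / 4)"
  have b0: "b > 0" using th0 g0 D0 by (simp add: b_def)
  have bg: "b \<le> \<gamma> / 4" unfolding b_def by (rule min.cobounded2)
  have bD: "2 * b * D < \<theta> / 4"
  proof -
    have "2 * b * D \<le> 2 * (\<theta> / (8 * (D + 1))) * D"
      using D0 by (intro mult_right_mono) (auto simp: b_def)
    also have "\<dots> = (\<theta> / 4) * (D / (D + 1))" using D0 by (simp add: field_simps)
    also have "\<dots> < (\<theta> / 4) * 1" using th0 D0 by (intro mult_strict_left_mono) auto
    finally show ?thesis by simp
  qed
  define h where "h = min (\<theta> * \<delta>^2 / (4 * a)) (b * \<delta>^3 / a)"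
  have h0: "h > 0" using th0 del a0 b0 by (simp add: h_def)
  have h1: "a * h / \<delta>^2 \<le> \<theta> / 4"
  proof -
    have "a * h \<le> a * (\<theta> * \<delta>^2 / (4 * a))" using a0 by (intro mult_left_mono) (auto simp: h_def)
    also have "\<dots> = \<theta> / 4 * \<delta>^2" using a0 by simp
    finally show ?thesis using del by (simp add: divide_le_eq)
  qed
  have h2: "a * h \<le> b * \<delta>^3"
  proof -
    have "a * h \<le> a * (b * \<delta>^3 / a)" using a0 by (intro mult_left_mono) (auto simp: h_def)
    thus ?thesis using a0 by simp
  qed
  define K where "K = (\<lambda>s::real. a * sqrt (s + h) - b * s)"
  define K1 where "K1 = (\<lambda>s::real. a / (2 * sqrt (s + h)) - b)"
  define K2 where "K2 = (\<lambda>s::real. - a / (4 * (s + h) * sqrt (s + h)))"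
  have d1: "\<And>s. s \<ge> 0 \<Longrightarrow> (K has_real_derivative K1 s) (at s)"
    unfolding K_def K1_def using Ksq_deriv(1)[OF h0] by blast
  have d2: "\<And>s. s \<ge> 0 \<Longrightarrow> (K1 has_real_derivative K2 s) (at s)"
    unfolding K1_def K2_def using Ksq_deriv(2)[OF h0] by blast
  have c2: "continuous_on {0..} K2"
  proof -
    have "\<And>s. s \<in> {0..} \<Longrightarrow> 4 * (s + h) * sqrt (s + h) \<noteq> 0" using h0 by auto
    thus ?thesis unfolding K2_def by (intro continuous_intros) auto
  qed
  define g where "g = (\<lambda>x. u x - K ((norm (x - z))^2))"
  have cg: "continuous_on (closure \<Omega>) g"
    unfolding g_def K_def using cont by (intro continuous_intros) auto
  have cpt: "compact (closure \<Omega>)" using bd by (simp add: compact_closure)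
  have ne: "closure \<Omega> \<noteq> {}" using zc by auto
  obtain x0 where x0: "x0 \<in> closure \<Omega>" "\<forall>y\<in>closure \<Omega>. g y \<le> g x0"
    using continuous_attains_sup[OF cpt ne cg] by blast
  define s0 where "s0 = norm (x0 - z)"
  define \<sigma> where "\<sigma> = (norm (x0 - z))^2"
  have sig: "\<sigma> = s0^2" by (simp add: \<sigma>_def s0_def)
  have s00: "s0 \<ge> 0" by (simp add: s0_def)
  have far: "s0 \<ge> \<delta>"
  proof (rule ccontr)
    assume "\<not> s0 \<ge> \<delta>"
    hence near: "s0 < \<delta>" by simp
    have "dist (u x0) (u z) < \<gamma> / 2" using d0(2) x0(1) near del by (simp add: dist_norm s0_def)
    hence "\<bar>u x0 - u z\<bar> < \<gamma> / 2" by (simp only: dist_real_def)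
    hence ux0: "u x0 < u z + \<gamma> / 2" by (simp only: abs_less_iff) linarith
    have "g xmax \<le> g x0" using x0(2) xm by blast
    moreover have "K \<sigma> \<ge> a * sqrt h - b * \<delta>^2"
    proof -
      have "sqrt h \<le> sqrt (\<sigma> + h)" by (simp add: sig)
      hence "a * sqrt h \<le> a * sqrt (\<sigma> + h)" using a0 by simp
      moreover have "\<sigma> \<le> \<delta>^2" unfolding sig using near s00 by (intro power_mono) auto
      hence "b * \<sigma> \<le> b * \<delta>^2" using b0 by simp
      ultimately show ?thesis by (simp add: K_def)
    qed
    moreover have "K ((norm (xmax - z))^2) \<le> a * (r + sqrt h)"
    proof -
      have "sqrt (r^2 + h) \<le> sqrt ((r + sqrt h)^2)"
        using r0 h0 by (intro real_sqrt_le_mono) (simp add: power2_sum)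
      also have "\<dots> = r + sqrt h" using r0 h0 by simp
      finally have "a * sqrt (r^2 + h) \<le> a * (r + sqrt h)" using a0 by simp
      moreover have "b * r^2 \<ge> 0" using b0 by simp
      ultimately show ?thesis by (simp add: K_def r_def)
    qed
    ultimately have "u x0 \<ge> M - a * r - b * \<delta>^2"
      by (simp add: g_def M_def \<sigma>_def algebra_simps)
    moreover have "b * \<delta>^2 \<le> \<gamma> / 4"
    proof -
      have "\<delta>^2 \<le> 1" using del by (simp add: power_le_one)
      hence "b * \<delta>^2 \<le> b" using b0 by (simp add: mult_left_le)
      thus ?thesis using bg by simp
    qed
    moreover have "a * r = \<Lambda> * M * r + \<theta> * r" by (simp add: a_def algebra_simps)
    moreover have "\<gamma> = M - \<Lambda> * M * r - u z" by (simp add: \<gamma>_def)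
    ultimately have "\<theta> * r \<ge> \<gamma> / 4" using ux0 by linarith
    thus False using thr by simp
  qed
  have s0p: "s0 > 0" using far del by simp
  have s0D: "s0 \<le> D" using Dist[OF x0(1)] by (simp add: s0_def)
  have sp: "\<sigma> > 0" using s0p by (simp add: sig)
  have sd: "\<sigma> \<ge> \<delta>^2" unfolding sig using far del by (intro power_mono) auto
  define t where "t = sqrt (\<sigma> + h)"
  have t0: "t > 0" using sp h0 by (simp add: t_def)
  have tt: "t * t = \<sigma> + h" using sp h0 by (simp add: t_def)
  have ts: "t \<ge> s0"
  proof -
    have "sqrt (s0^2) \<le> t" unfolding t_def sig using h0 by (intro real_sqrt_le_mono) simp
    thus ?thesis using s00 by simp
  qed
  have td: "t \<ge> \<delta>"
  proof -
    have "sqrt (\<delta>^2) \<le> t" unfolding t_def using h0 sd by (intro real_sqrt_le_mono) simp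
    thus ?thesis using del by simp
  qed
  have K1e: "K1 \<sigma> = a / (2 * t) - b" by (simp add: K1_def t_def)
  have K2e: "K2 \<sigma> = - a / (4 * (t * t) * t)"
  proof -
    have "K2 \<sigma> = - a / (4 * (\<sigma> + h) * t)" by (simp add: K2_def t_def)
    thus ?thesis by (simp only: tt)
  qed
  have conc: "2 * K2 \<sigma> * \<sigma> + K1 \<sigma> < 0"
  proof -
    have "2 * K2 \<sigma> * \<sigma> + K1 \<sigma> = a * h / (2 * (t * t) * t) - b"
    proof -
      have "2 * K2 \<sigma> * \<sigma> + K1 \<sigma> = a * ((t * t) - \<sigma>) / (2 * (t * t) * t) - b"
        unfolding K1e K2e using t0 by (simp add: field_simps)
      thus ?thesis using tt by simp
    qed
    also have "\<dots> < 0"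
    proof -
      have "\<delta>^3 \<le> (t * t) * t" unfolding power3_eq_cube using del td
        by (intro mult_mono) auto
      hence "b * \<delta>^3 \<le> b * ((t * t) * t)" using b0 by simp
      moreover have "b * ((t * t) * t) > 0" using b0 t0 by simp
      ultimately have "a * h < 2 * b * ((t * t) * t)" using h2 by linarith
      thus ?thesis using t0 by (simp add: divide_less_eq)
    qed
    finally show ?thesis .
  qed
  have grad: "2 * K1 \<sigma> * s0 > \<Lambda> * M"
  proof -
    have e1: "2 * K1 \<sigma> * s0 = a * (s0 / t) - 2 * b * s0" unfolding K1e using t0 by (simp add: field_simps)
    have "s0 / t \<ge> \<sigma> / (t * t)"
    proof -
      have "\<sigma> / (t * t) = (s0 * s0) / (t * t)" by (simp add: sig power2_eq_square)
      also have "\<dots> \<le> (s0 * t) / (t * t)" using ts s00 t0 by (intro divide_right_mono mult_left_mono) auto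
      also have "\<dots> = s0 / t" using t0 by simp
      finally show ?thesis .
    qed
    moreover have "\<sigma> / (t * t) \<ge> 1 - h / \<delta>^2"
    proof -
      have "\<sigma> / (t * t) = 1 - h / (t * t)" unfolding tt using sp h0 by (simp add: field_simps)
      moreover have "h / (t * t) \<le> h / \<delta>^2" unfolding tt using h0 del sd sp
        by (intro divide_left_mono) auto
      ultimately show ?thesis by simp
    qed
    ultimately have "a * (s0 / t) \<ge> a * (1 - h / \<delta>^2)" using a0 by (intro mult_left_mono) auto
    moreover have "a * (1 - h / \<delta>^2) = a - a * h / \<delta>^2" by (simp add: algebra_simps)
    moreover have "2 * b * s0 \<le> 2 * b * D" using s0D b0 by simp
    moreover have "a = \<Lambda> * M + \<theta>" by (simp add: a_def)
    ultimately show ?thesis using e1 h1 bD th0 by linarith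
  qed
  have k1p: "K1 \<sigma> > 0"
  proof -
    have "2 * K1 \<sigma> * s0 > 0" using grad LM by linarith
    thus ?thesis using s0p by (simp add: zero_less_mult_iff)
  qed
  show False
  proof (rule core[OF op cv sb sub z d1 d2 c2 x0(1)])
    show "\<forall>x\<in>closure \<Omega>. u x - K ((norm (x - z))^2) \<le> u x0 - K ((norm (x0 - z))^2)"
      using x0 by (simp add: g_def)
    show "K1 ((norm (x0 - z))^2) > 0" using k1p by (simp add: \<sigma>_def)
    define \<xi> where "\<xi> = (2 * K1 \<sigma>) *\<^sub>R (x0 - z)"
    define q where "q = 8 * (K1 \<sigma>)^2 * \<sigma> * (2 * K2 \<sigma> * \<sigma> + K1 \<sigma>)"
    have "q < 0" using k1p sp conc by (simp add: q_def mult_pos_neg)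
    moreover have "u x0 > 0 \<longrightarrow> norm \<xi> > \<Lambda> * \<bar>u x0\<bar>"
    proof
      assume ux: "u x0 > 0"
      have "norm \<xi> = 2 * K1 \<sigma> * s0" using k1p by (simp add: \<xi>_def s0_def)
      moreover have "\<Lambda> * \<bar>u x0\<bar> \<le> \<Lambda> * M" using ux mx x0(1) L by (simp add: M_def mult_left_mono)
      ultimately show "norm \<xi> > \<Lambda> * \<bar>u x0\<bar>" using grad by linarith
    qed
    ultimately have "opE \<Lambda> (u x0) \<xi> q > 0" by (rule opE_pos_q)
    thus "opE \<Lambda> (u x0) ((2 * K1 ((norm (x0 - z))^2)) *\<^sub>R (x0 - z))
              (8 * (K1 ((norm (x0 - z))^2))^2 * (norm (x0 - z))^2 *
                 (2 * K2 ((norm (x0 - z))^2) * (norm (x0 - z))^2 + K1 ((norm (x0 - z))^2))) > 0"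
      by (simp add: \<xi>_def q_def \<sigma>_def)
  qed
qed

lemma max_bound:
  fixes \<Omega> :: "'a::euclidean_space set"
  assumes op: "open \<Omega>" and cv: "convex \<Omega>" and bd: "bounded \<Omega>"
    and sb: "smooth_boundary_with_normal \<Omega> \<nu>"
    and sub: "visc_subsolution \<Omega> \<nu> \<Lambda> u" and cont: "continuous_on (closure \<Omega>) u"
    and L: "\<Lambda> \<ge> 0" and xm: "xmax \<in> closure \<Omega>" and mx: "\<forall>x\<in>closure \<Omega>. u x \<le> u xmax"
    and Mp: "u xmax > 0"
    and z: "z \<in> closure \<Omega>"
  shows "u z \<ge> u xmax - \<Lambda> * u xmax * dist xmax z"
proof (rule ccontr)
  assume neg: "\<not> u z \<ge> u xmax - \<Lambda> * u xmax * dist xmax z"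
  define f where "f = (\<lambda>w. u w - (u xmax - \<Lambda> * u xmax * dist xmax w))"
  have cf: "continuous_on (closure \<Omega>) f" unfolding f_def using cont by (intro continuous_intros) auto
  have "f z < 0" using neg by (simp add: f_def)
  then obtain z' where z': "z' \<in> \<Omega>" "f z' < 0" using approx_interior[OF cf z] by blast
  show False
    by (rule max_bound_int[OF op cv bd sb sub cont L xm mx Mp z'(1)]) (use z'(2) in \<open>simp add: f_def\<close>)
qed

lemma far_point:
  fixes \<Omega> :: "'a::euclidean_space set"
  assumes op: "open \<Omega>" and bd: "bounded \<Omega>" and x: "x \<in> \<Omega>" and y: "y \<in> closure \<Omega>" and xy: "x \<noteq> y"
  shows "dist x y < diameter \<Omega>"
proof -
  obtain e where e: "e > 0" "ball x e \<subseteq> \<Omega>" using op x openE by blast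
  define n where "n = norm (x - y)"
  have n0: "n > 0" using xy by (simp add: n_def)
  define w where "w = x + ((e/2) / n) *\<^sub>R (x - y)"
  have "dist x w = e / 2" using n0 e by (simp add: w_def dist_norm n_def)
  hence "w \<in> \<Omega>" using e by auto
  hence wc: "w \<in> closure \<Omega>" using closure_subset by blast
  have "w - y = (1 + (e/2) / n) *\<^sub>R (x - y)" by (simp add: w_def algebra_simps)
  hence "dist w y = (1 + (e/2) / n) * n" using n0 e by (simp add: dist_norm n_def)
  also have "\<dots> = n + e / 2" using n0 by (simp add: field_simps)
  finally have "dist w y = n + e / 2" .
  moreover have "dist w y \<le> diameter \<Omega>"
    using diameter_bounded_bound[OF bounded_closure[OF bd] wc y] diameter_closure[OF bd] by simp
  ultimately show ?thesis using e by (simp add: dist_norm n_def)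
qed

theorem corollary4:
  fixes \<Omega> :: "'a::euclidean_space set" and \<nu> :: "'a \<Rightarrow> 'a" and u :: "'a \<Rightarrow> real"
    and xmax xmin :: 'a
  assumes "open \<Omega>" and "bounded \<Omega>" and "convex \<Omega>"
    and "smooth_boundary_with_normal \<Omega> \<nu>"
    and "visc_solution \<Omega> \<nu> (2 / diameter \<Omega>) u"
    and "\<not> (\<exists>c. \<forall>x\<in>closure \<Omega>. u x = c)"
    and "xmax \<in> closure \<Omega>" and "\<forall>x\<in>closure \<Omega>. u x \<le> u xmax"
    and "xmin \<in> closure \<Omega>" and "\<forall>x\<in>closure \<Omega>. u xmin \<le> u x"
  shows "dist xmax xmin = diameter \<Omega> \<and> xmax \<in> frontier \<Omega> \<and> xmin \<in> frontier \<Omega>"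
proof -
  note op = assms(1) and bd = assms(2) and cv = assms(3) and sb = assms(4) and sol = assms(5)
    and nc = assms(6) and xm = assms(7) and mx = assms(8) and xn = assms(9) and mn = assms(10)
  define d where "d = diameter \<Omega>"
  define \<Lambda> where "\<Lambda> = 2 / d"
  have ne: "\<Omega> \<noteq> {}" using nc by auto
  then obtain x where x: "x \<in> \<Omega>" by blast
  obtain e where e: "e > 0" "ball x e \<subseteq> \<Omega>" using op x openE by blast
  obtain bb :: 'a where bb: "bb \<in> Basis" using nonempty_Basis by blast
  define y where "y = x + (e/2) *\<^sub>R bb"
  have dxy: "dist x y = e / 2" using e bb by (simp add: y_def dist_norm)
  hence "y \<in> \<Omega>" using e by auto
  hence "dist x y \<le> d" using diameter_bounded_bound[OF bd x] by (simp add: d_def)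
  hence d0: "d > 0" using dxy e by simp
  have L: "\<Lambda> > 0" using d0 by (simp add: \<Lambda>_def)
  have cont: "continuous_on (closure \<Omega>) u" and sub: "visc_subsolution \<Omega> \<nu> \<Lambda> u"
    and sup: "visc_supersolution \<Omega> \<nu> \<Lambda> u"
    using sol by (auto simp: visc_solution_def \<Lambda>_def d_def)
  have subn: "visc_subsolution \<Omega> \<nu> \<Lambda> (\<lambda>x. - u x)" using super_neg_sub[OF sup] .
  have contn: "continuous_on (closure \<Omega>) (\<lambda>x. - u x)" using cont by (intro continuous_intros)
  define M where "M = u xmax"
  define m where "m = u xmin"
  have Mp: "M > 0"
  proof (rule ccontr)
    assume "\<not> M > 0"
    hence le: "\<forall>x\<in>closure \<Omega>. u x \<le> 0" using mx by (auto simp: M_def)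
    obtain p where p: "p \<in> closure \<Omega>" "u p \<noteq> 0" using nc by blast
    hence "u p < 0" using le by force
    thus False using no_neg_solution[OF op cv bd sb sub cont L le p(1)] by blast
  qed
  have mn0: "m < 0"
  proof (rule ccontr)
    assume "\<not> m < 0"
    hence le: "\<forall>x\<in>closure \<Omega>. - u x \<le> 0" using mn by (force simp: m_def)
    obtain p where p: "p \<in> closure \<Omega>" "u p \<noteq> 0" using nc by blast
    hence "- u p < 0" using le by force
    thus False using no_neg_solution[OF op cv bd sb subn contn L le p(1)] by blast
  qed
  have b1: "u z \<ge> M - \<Lambda> * M * dist xmax z" if "z \<in> closure \<Omega>" for z
    using max_bound[OF op cv bd sb sub cont less_imp_le[OF L] xm mx _ that] Mp by (simp add: M_def)
  have b2: "- u z \<ge> - m - \<Lambda> * (- m) * dist xmin z" if "z \<in> closure \<Omega>" for z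
  proof -
    have mxn: "\<forall>x\<in>closure \<Omega>. - u x \<le> - u xmin" using mn by simp
    have Mpn: "- u xmin > 0" using mn0 by (simp add: m_def)
    show ?thesis
      using max_bound[OF op cv bd sb subn contn less_imp_le[OF L] xn mxn Mpn that] by (simp add: m_def)
  qed
  define D0 where "D0 = dist xmax xmin"
  have dK: "diameter (closure \<Omega>) = d" using diameter_closure[OF bd] by (simp add: d_def)
  have D0le: "D0 \<le> d" using diameter_bounded_bound[OF bounded_closure[OF bd] xm xn] dK by (simp add: D0_def)
  have D0eq: "D0 = d"
  proof (rule ccontr)
    assume "D0 \<noteq> d"
    hence lt: "D0 < d" using D0le by simp
    define z where "z = midpoint xmax xmin"
    have "convex (closure \<Omega>)" using cv by (rule convex_closure)
    hence zc: "z \<in> closure \<Omega>" unfolding z_def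
      using closed_segment_subset[OF xm xn] midpoint_in_closed_segment by blast
    have dz1: "dist xmax z = D0 / 2" by (simp add: z_def D0_def dist_midpoint)
    have dz2: "dist xmin z = D0 / 2" by (simp add: z_def D0_def dist_midpoint dist_commute)
    define f where "f = 1 - \<Lambda> * (D0 / 2)"
    have f0: "f > 0"
    proof -
      have "\<Lambda> * (D0 / 2) = D0 / d" by (simp add: \<Lambda>_def)
      also have "\<dots> < 1" using lt d0 by simp
      finally show ?thesis by (simp add: f_def)
    qed
    have "u z \<ge> M * f" using b1[OF zc] dz1 by (simp add: f_def algebra_simps)
    moreover have "- u z \<ge> - m * f" using b2[OF zc] dz2 by (simp add: f_def algebra_simps)
    moreover have "M * f > 0" using Mp f0 by simp
    moreover have "- m * f > 0" using mn0 f0 by (simp add: mult_neg_pos)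
    ultimately show False by linarith
  qed
  have neq: "xmax \<noteq> xmin" using D0eq d0 by (auto simp: D0_def)
  have fr1: "xmax \<in> frontier \<Omega>"
  proof -
    have "xmax \<notin> \<Omega>"
    proof
      assume "xmax \<in> \<Omega>"
      from far_point[OF op bd this xn neq] show False using D0eq by (simp add: D0_def d_def)
    qed
    thus ?thesis using xm op by (simp add: frontier_def interior_open)
  qed
  have fr2: "xmin \<in> frontier \<Omega>"
  proof -
    have "xmin \<notin> \<Omega>"
    proof
      assume "xmin \<in> \<Omega>"
      from far_point[OF op bd this xm] neq show False using D0eq by (simp add: D0_def d_def dist_commute)
    qed
    thus ?thesis using xn op by (simp add: frontier_def interior_open)
  qed
  show ?thesis using D0eq fr1 fr2 by (simp add: D0_def d_def)
qed

end
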